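(* Let $k\ge1$ be an integer and $x\ge p_k$. For every $y\ge x$, the interval $(\eta_k(x)y,\,y]$ contains at least $k$ primes; and $\eta_k(x)$ is the largest real $\lambda$ such that $(\lambda y,y]$ contains at least $k$ primes for every $y\ge x$.
   Context: $p_i$ denotes the $i$-th prime. For $x\ge p_k$, $\eta_k(x)=\min\{p_{i-k}/p_i:\ p_i>x\}$. *)

theory Defs
  imports Complex_Main "HOL-Computational_Algebra.Primes" "HOL-Library.Infinite_Set"
begin

text \<open>The i-th prime, 1-indexed: nth_prime 1 = 2, nth_prime 2 = 3, ...\<close>
definition nth_prime :: "nat \<Rightarrow> nat" where
  "nth_prime i = enumerate {p::nat. prime p} (i - 1)"

definition eta :: "nat \<Rightarrow> real \<Rightarrow> real" where
  "eta k x = Inf {real (nth_prime (i - k)) / real (nth_prime i) | i. i \<ge> 1 \<and> real (nth_prime i) > x}"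

end

theory Submission
  imports Defs
begin

abbreviation "ep \<equiv> enumerate {p::nat. prime p}"

lemma infP: "infinite {p::nat. prime p}" using primes_infinite by simp

lemma ep_prime: "prime (ep n)" using enumerate_in_set[OF infP] by simp
lemma ep_less[simp]: "ep m < ep n \<longleftrightarrow> m < n" using enumerate_mono_iff[OF infP] by simp
lemma ep_le[simp]: "ep m \<le> ep n \<longleftrightarrow> m \<le> n" using enumerate_mono_le_iff[OF infP] by simp
lemma ep_ge: "n \<le> ep n" using le_enumerate[OF infP] by simp
lemma ep_ex: "prime q \<Longrightarrow> \<exists>n. q = ep n" using enumerate_Ex[OF infP] by auto
lemma ep_inj: "inj ep" by (rule injI) (metis ep_le order_antisym order_refl)
lemma ep_pos: "ep n > 0" using ep_prime[of n] prime_gt_0_nat by blast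

lemma np: "nth_prime i = ep (i - 1)" by (simp add: nth_prime_def)

theorem mainTheorem11:
  fixes k :: nat and x :: real
  assumes "k \<ge> 1" and "x \<ge> real (nth_prime k)"
  shows "(\<forall>y::real. y \<ge> x \<longrightarrow>
            card {q::nat. prime q \<and> eta k x * y < real q \<and> real q \<le> y} \<ge> k)
       \<and> (\<forall>lam::real. (\<forall>y::real. y \<ge> x \<longrightarrow>
            card {q::nat. prime q \<and> lam * y < real q \<and> real q \<le> y} \<ge> k)
            \<longrightarrow> lam \<le> eta k x)"
proof -
  define S where "S = {real (nth_prime (i - k)) / real (nth_prime i) | i. i \<ge> 1 \<and> real (nth_prime i) > x}"
  have etaS: "eta k x = Inf S" unfolding S_def eta_def by simp
  have bdd: "bdd_below S" unfolding S_def by (rule bdd_belowI[of _ 0]) auto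
  have xk: "x \<ge> ep (k - 1)" using assms(2) by (simp add: np)
  have ne: "S \<noteq> {}"
  proof -
    define i where "i = nat \<lceil>x\<rceil> + 2"
    have "real (ep (i - 1)) \<ge> real (i - 1)" using ep_ge by simp
    moreover have "real (i - 1) > x" unfolding i_def by linarith
    ultimately have "real (nth_prime i) > x" by (simp add: np)
    moreover have "i \<ge> 1" unfolding i_def by simp
    ultimately show ?thesis unfolding S_def by blast
  qed
  have eta0: "eta k x \<ge> 0" unfolding etaS
    by (rule cInf_greatest[OF ne]) (auto simp: S_def)
  have part1: "card {q::nat. prime q \<and> eta k x * y < real q \<and> real q \<le> y} \<ge> k" if yx: "y \<ge> x" for y
  proof -
    have ypos: "y > 0" using yx xk ep_pos[of "k-1"] by linarith
    define M where "M = {n. real (ep n) \<le> y}"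
    have finM: "finite M"
    proof (rule finite_subset[of _ "{..nat \<lceil>y\<rceil>}"])
      show "M \<subseteq> {..nat \<lceil>y\<rceil>}"
      proof
        fix n assume "n \<in> M"
        then have "real (ep n) \<le> y" by (simp add: M_def)
        moreover have "real n \<le> real (ep n)" using ep_ge by simp
        ultimately show "n \<in> {..nat \<lceil>y\<rceil>}" by (simp, linarith)
      qed
    qed simp
    have kM: "k - 1 \<in> M" using yx xk by (simp add: M_def)
    define m where "m = Max M"
    have mM: "m \<in> M" unfolding m_def using finM kM Max_in by blast
    have km: "k - 1 \<le> m" unfolding m_def using finM kM Max_ge by blast
    have "Suc m \<notin> M"
    proof
      assume "Suc m \<in> M"
      then have "Suc m \<le> m" unfolding m_def using Max_ge[OF finM] by blast
      then show False by simp
    qed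
    then have ym: "y < real (ep (Suc m))" by (simp add: M_def)
    define i where "i = m + 2"
    have nti: "nth_prime i = ep (Suc m)" by (simp add: np i_def)
    have ntik: "nth_prime (i - k) = ep (Suc m - k)" using assms(1) km by (simp add: np i_def)
    have "real (nth_prime (i - k)) / real (nth_prime i) \<in> S"
    proof -
      have "x < real (nth_prime i)" using nti ym yx by simp
      moreover have "i \<ge> 1" by (simp add: i_def)
      ultimately show ?thesis unfolding S_def by blast
    qed
    then have "eta k x \<le> real (ep (Suc m - k)) / real (ep (Suc m))"
      unfolding etaS using cInf_lower[OF _ bdd] ntik nti by metis
    then have "eta k x * y \<le> real (ep (Suc m - k)) / real (ep (Suc m)) * y"
      using ypos by (intro mult_right_mono) auto
    also have "\<dots> < real (ep (Suc m - k))"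
    proof -
      have "y / real (ep (Suc m)) < 1" using ym ypos by simp
      then have "real (ep (Suc m - k)) * (y / real (ep (Suc m))) < real (ep (Suc m - k))"
        using ep_pos[of "Suc m - k"] mult_strict_left_mono[of "y / real (ep (Suc m))" 1 "real (ep (Suc m - k))"] by simp
      then show ?thesis by (simp add: mult.commute)
    qed
    finally have low: "eta k x * y < real (ep (Suc m - k))" .
    have sub: "ep ` {Suc m - k..m} \<subseteq> {q::nat. prime q \<and> eta k x * y < real q \<and> real q \<le> y}"
    proof
      fix q assume "q \<in> ep ` {Suc m - k..m}"
      then obtain n where n: "Suc m - k \<le> n" "n \<le> m" "q = ep n" by auto
      have a1: "real (ep (Suc m - k)) \<le> real (ep n)" using n by simp
      have a2: "real (ep n) \<le> real (ep m)" using n by simp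
      have a3: "real (ep m) \<le> y" using mM by (simp add: M_def)
      have "eta k x * y < real q" "real q \<le> y" using a1 a2 a3 low n(3) by linarith+
      then show "q \<in> {q::nat. prime q \<and> eta k x * y < real q \<and> real q \<le> y}"
        using n ep_prime by auto
    qed
    have fin2: "finite {q::nat. prime q \<and> eta k x * y < real q \<and> real q \<le> y}"
      by (rule finite_subset[of _ "{..nat \<lceil>y\<rceil>}"]) (auto, linarith)
    have "card (ep ` {Suc m - k..m}) = k"
      using card_image[OF inj_on_subset[OF ep_inj]] km assms(1) by simp
    then show ?thesis using card_mono[OF fin2 sub] by simp
  qed
  have part2: "lam \<le> eta k x" if H: "\<forall>y::real. y \<ge> x \<longrightarrow>
            card {q::nat. prime q \<and> lam * y < real q \<and> real q \<le> y} \<ge> k" for lam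
  proof (rule ccontr)
    assume "\<not> lam \<le> eta k x"
    then have lt: "Inf S < lam" and lpos: "lam > 0" using eta0 etaS by auto
    obtain s where "s \<in> S" "s < lam" using cInf_lessD[OF ne lt] by blast
    then obtain i where i: "i \<ge> 1" "real (nth_prime i) > x"
      "real (nth_prime (i - k)) / real (nth_prime i) < lam" unfolding S_def by blast
    define j where "j = i - 1"
    have ej: "real (ep j) > x" using i by (simp add: np j_def)
    have jk: "k \<le> j"
    proof -
      have "ep (k - 1) < ep j" using ej xk by linarith
      then show ?thesis using assms(1) by simp
    qed
    have r: "real (ep (j - k)) / real (ep j) < lam"
      using i(3) by (simp add: np j_def diff_commute)
    have r2: "real (ep (j - k)) / lam < real (ep j)"
      using r lpos ep_pos[of j] by (simp add: field_simps)
    define y where "y = max x (max (real (ep (j - k)) / lam) (real (ep j) - 1/2))"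
    have yx: "y \<ge> x" unfolding y_def by simp
    have yj: "y < real (ep j)" unfolding y_def using ej r2 by simp
    have ly: "lam * y \<ge> real (ep (j - k))"
    proof -
      have "y \<ge> real (ep (j - k)) / lam" unfolding y_def by simp
      then show ?thesis using lpos by (simp add: divide_le_eq mult.commute)
    qed
    have sub: "{q::nat. prime q \<and> lam * y < real q \<and> real q \<le> y} \<subseteq> ep ` {Suc (j - k)..<j}"
    proof
      fix q assume "q \<in> {q::nat. prime q \<and> lam * y < real q \<and> real q \<le> y}"
      then have q: "prime q" "lam * y < real q" "real q \<le> y" by auto
      obtain n where n: "q = ep n" using ep_ex[OF q(1)] by blast
      have "ep n < ep j" using q(3) yj n by linarith
      then have "n < j" by simp
      moreover have "ep (j - k) < ep n" using q(2) ly n by linarith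
      then have "j - k < n" by simp
      ultimately show "q \<in> ep ` {Suc (j - k)..<j}" using n by auto
    qed
    have "card {q::nat. prime q \<and> lam * y < real q \<and> real q \<le> y} \<le> card (ep ` {Suc (j - k)..<j})"
      by (rule card_mono[OF _ sub]) simp
    also have "\<dots> \<le> card {Suc (j - k)..<j}" by (rule card_image_le) simp
    also have "\<dots> < k" using jk assms(1) by simp
    finally show False using H yx by fastforce
  qed
  show ?thesis using part1 part2 by blast
qed

end
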